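(* For every $t>0$, $$\int_0^\infty\frac{x}{t^2+x^2}\big(1-\tanh(\pi x)\big)dx=\psi(2t)+\beta(2t)-\log(2t)=\psi(t+\tfrac12)-\log t.$$ In particular $\int_0^\infty\frac{x}{1+x^2}(1-\tanh(\pi x))dx=\psi(3/2)$.
   Context: $\psi=\Gamma'/\Gamma$ is the digamma function and $\beta(x):=\sum_{k=0}^\infty\frac{(-1)^k}{x+k}=\frac12[\psi(\frac{x+1}{2})-\psi(\frac x2)]$ for $x>0$. *)

theory Defs
  imports "HOL-Analysis.Analysis"
begin

definition dbeta :: "real \<Rightarrow> real" where
  "dbeta x = (\<Sum>k. (-1) ^ k / (x + real k))"

end

theory Submission
  imports Defs "HOL-Analysis.Analysis" "HOL-Real_Asymp.Real_Asymp"
begin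



lemma FTC_Ici:
  fixes f F :: "real \<Rightarrow> real"
  assumes F: "\<And>x. (F has_real_derivative f x) (at x)"
  assumes f: "\<And>x. isCont f x"
  assumes nn: "\<And>x. x \<ge> 0 \<Longrightarrow> f x \<ge> 0"
  assumes B: "(F \<longlongrightarrow> B) at_top"
  shows "(f has_integral (B - F 0)) {0..}"
proof -
  have A: "((F \<circ> real_of_ereal) \<longlongrightarrow> F 0) (at_right (0::ereal))"
  proof -
    have "isCont F 0" using F DERIV_isCont by blast
    then have "(F \<longlongrightarrow> F 0) (at_right 0)" by (simp add: isCont_def filterlim_at_split)
    then show ?thesis unfolding zero_ereal_def ereal_tendsto_simps by simp
  qed
  have B': "((F \<circ> real_of_ereal) \<longlongrightarrow> B) (at_left \<infinity>)"
    using B unfolding ereal_tendsto_simps by simp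
  have 1: "set_integrable lborel (einterval 0 \<infinity>) f" "(LBINT x=0..\<infinity>. f x) = B - F 0"
    using interval_integral_FTC_nonneg[of 0 \<infinity> F f "F 0" B] F f nn A B'
    by (auto simp: zero_ereal_def)
  have e: "einterval 0 \<infinity> = {0<..}" by (auto simp: einterval_def zero_ereal_def)
  have "(LBINT x=0..\<infinity>. f x) = (LINT x : {0<..} | lborel. f x)"
    by (simp add: interval_lebesgue_integral_def e zero_ereal_def[symmetric])
  with 1 have "(f has_integral (B - F 0)) {0<..}"
    using set_borel_integral_eq_integral[of "{0<..}" f] e
    by (metis has_integral_integral)
  moreover have "negligible {x \<in> {0<..} - {0..}. f x \<noteq> 0}" "negligible {x \<in> {0..} - {0<..}. f x \<noteq> 0}"
    by (auto intro: negligible_subset[of "{0::real}"])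
  ultimately show ?thesis using has_integral_spike_set_eq by blast
qed



lemma arctan_div_at_top: "s > 0 \<Longrightarrow> ((\<lambda>x. arctan (x / s)) \<longlongrightarrow> pi/2) at_top"
proof -
  assume s: "s > 0"
  have "filterlim (\<lambda>x. x * (1/s)) at_top at_top"
    by (rule filterlim_at_top_mult_tendsto_pos[OF tendsto_const]) (use s in \<open>simp_all add: filterlim_ident\<close>)
  then show ?thesis by (intro filterlim_compose[OF tendsto_arctan_at_top]) simp
qed

lemma deriv_carctan:
  fixes c x :: real assumes c: "c > 0"
  shows "((\<lambda>x. c * arctan (x/c)) has_real_derivative c * (1 / (1 + (x/c)\<^sup>2) * (1/c))) (at x)"
  using c by (auto intro!: derivative_eq_intros simp: inverse_eq_divide)

lemma alg1:
  fixes s t x :: real assumes t: "t > 0" and s: "s > 0" and st: "s\<^sup>2 - t\<^sup>2 \<noteq> 0"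
  shows "(2/pi) * (s * (1 / (1 + (x/s)\<^sup>2) * (1/s)) - t * (1 / (1 + (x/t)\<^sup>2) * (1/t))) / (s\<^sup>2 - t\<^sup>2)
       = x / (t\<^sup>2 + x\<^sup>2) * ((2 * x / pi) / (x\<^sup>2 + s\<^sup>2))"
proof -
  have a: "x\<^sup>2 + s\<^sup>2 > 0" "x\<^sup>2 + t\<^sup>2 > 0" using s t by (simp_all add: add_nonneg_pos)
  have e: "1 / (1 + (x/c)\<^sup>2) = c\<^sup>2/(x\<^sup>2 + c\<^sup>2)" if "c > 0" for c :: real
    using that by (simp add: field_simps power2_eq_square add_nonneg_pos)
  have "s * (1 / (1 + (x/s)\<^sup>2) * (1/s)) - t * (1 / (1 + (x/t)\<^sup>2) * (1/t)) = s\<^sup>2/(x\<^sup>2 + s\<^sup>2) - t\<^sup>2/(x\<^sup>2 + t\<^sup>2)"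
    using s t by (simp add: e)
  also have "\<dots> = x\<^sup>2 * (s\<^sup>2 - t\<^sup>2) / ((x\<^sup>2 + s\<^sup>2) * (x\<^sup>2 + t\<^sup>2))"
    using a s t by (simp add: divide_simps add.commute) (simp add: algebra_simps)
  finally have "(2/pi) * (s * (1 / (1 + (x/s)\<^sup>2) * (1/s)) - t * (1 / (1 + (x/t)\<^sup>2) * (1/t))) / (s\<^sup>2 - t\<^sup>2)
     = (2/pi) * (x\<^sup>2 / ((x\<^sup>2 + s\<^sup>2) * (x\<^sup>2 + t\<^sup>2)))" using st by simp
  also have "\<dots> = x / (t\<^sup>2 + x\<^sup>2) * ((2 * x / pi) / (x\<^sup>2 + s\<^sup>2))"
    using s t by (simp add: power2_eq_square mult_ac add.commute)
  finally show ?thesis .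
qed



lemma int_qf:
  fixes t s :: real
  assumes t: "t > 0" and s: "s > 0"
  shows "((\<lambda>x. x / (t\<^sup>2 + x\<^sup>2) * ((2 * x / pi) / (x\<^sup>2 + s\<^sup>2))) has_integral 1 / (t + s)) {0..}"
proof (cases "s = t")
  case True
  define F where "F x = (2/pi) * ((1/(2*t)) * arctan (x/t) - x / (2*(x\<^sup>2+t\<^sup>2)))" for x
  have "((\<lambda>x. x / (t\<^sup>2 + x\<^sup>2) * ((2 * x / pi) / (x\<^sup>2 + s\<^sup>2))) has_integral (1/(2*t) - F 0)) {0..}"
  proof (rule FTC_Ici)
    fix x :: real
    have "x\<^sup>2 + t\<^sup>2 > 0" using t by (simp add: add_nonneg_pos)
    have "(F has_real_derivative (2/pi) * ((1/(2*t)) * (1 / (1 + (x/t)\<^sup>2) * (1/t)) - ((1 * (2*(x\<^sup>2+t\<^sup>2)) - x * (2 * (2 * x))) / (2*(x\<^sup>2+t\<^sup>2))\<^sup>2))) (at x)"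
      unfolding F_def using t \<open>x\<^sup>2 + t\<^sup>2 > 0\<close>
      apply (auto intro!: derivative_eq_intros simp: power2_eq_square)
      by (auto simp: field_simps)
    moreover have "(2/pi) * ((1/(2*t)) * (1 / (1 + (x/t)\<^sup>2) * (1/t)) - ((1 * (2*(x\<^sup>2+t\<^sup>2)) - x * (2 * (2 * x))) / (2*(x\<^sup>2+t\<^sup>2))\<^sup>2))
       = x / (t\<^sup>2 + x\<^sup>2) * ((2 * x / pi) / (x\<^sup>2 + s\<^sup>2))"
    proof -
      define u where "u = x\<^sup>2 + t\<^sup>2"
      have u: "u > 0" using t by (simp add: u_def add_nonneg_pos)
      have e1: "1 / (1 + (x/t)\<^sup>2) = t\<^sup>2/u" using t u by (simp add: u_def field_simps power2_eq_square)
      have e2: "(1 * (2*(x\<^sup>2+t\<^sup>2)) - x * (2 * (2 * x))) / (2*(x\<^sup>2+t\<^sup>2))\<^sup>2 = (u - 2*x\<^sup>2)/(2*u\<^sup>2)"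
        using u unfolding u_def[symmetric] by (simp add: field_simps power2_eq_square)
      have "(2/pi) * ((1/(2*t)) * (1 / (1 + (x/t)\<^sup>2) * (1/t)) - ((1 * (2*(x\<^sup>2+t\<^sup>2)) - x * (2 * (2 * x))) / (2*(x\<^sup>2+t\<^sup>2))\<^sup>2))
          = (2/pi) * (1/(2*u) - (u - 2*x\<^sup>2)/(2*u\<^sup>2))" unfolding e1 e2 using t by (simp add: power2_eq_square)
      also have "\<dots> = (2/pi) * (x\<^sup>2/u\<^sup>2)" using u by (simp add: field_simps power2_eq_square)
      also have "\<dots> = x / (t\<^sup>2 + x\<^sup>2) * ((2 * x / pi) / (x\<^sup>2 + s\<^sup>2))" using True u
        by (simp add: u_def power2_eq_square field_simps)
      finally show ?thesis .
    qed
    ultimately show "(F has_real_derivative x / (t\<^sup>2 + x\<^sup>2) * ((2 * x / pi) / (x\<^sup>2 + s\<^sup>2))) (at x)" by simp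
  next
    fix x :: real show "isCont (\<lambda>x. x / (t\<^sup>2 + x\<^sup>2) * ((2 * x / pi) / (x\<^sup>2 + s\<^sup>2))) x"
      using t s by (intro continuous_intros) (auto simp: add_pos_nonneg)
  next
    fix x :: real assume "x \<ge> 0" then show "0 \<le> x / (t\<^sup>2 + x\<^sup>2) * ((2 * x / pi) / (x\<^sup>2 + s\<^sup>2))"
      by (auto intro!: mult_nonneg_nonneg divide_nonneg_nonneg)
  next
    have "(F \<longlongrightarrow> (2/pi) * ((1/(2*t)) * (pi/2) - 0)) at_top" unfolding F_def using t
      by (intro tendsto_intros arctan_div_at_top) (simp_all, real_asymp)
    then show "(F \<longlongrightarrow> 1/(2*t)) at_top" by simp
  qed
  then show ?thesis using True by (simp add: F_def)
next
  case False
  define F where "F x = (2/pi) * (s * arctan (x/s) - t * arctan (x/t)) / (s\<^sup>2 - t\<^sup>2)" for x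
  have st: "s\<^sup>2 - t\<^sup>2 \<noteq> 0" using False s t by (auto simp: power2_eq_iff)
  have "((\<lambda>x. x / (t\<^sup>2 + x\<^sup>2) * ((2 * x / pi) / (x\<^sup>2 + s\<^sup>2))) has_integral (1/(t+s) - F 0)) {0..}"
  proof (rule FTC_Ici)
    fix x :: real
    have "x\<^sup>2 + t\<^sup>2 > 0" using t by (simp add: add_nonneg_pos)
    have "(F has_real_derivative (2/pi) * (s * (1 / (1 + (x/s)\<^sup>2) * (1/s)) - t * (1 / (1 + (x/t)\<^sup>2) * (1/t))) / (s\<^sup>2 - t\<^sup>2)) (at x)"
      unfolding F_def
      by (intro DERIV_cdivide DERIV_cmult DERIV_diff deriv_carctan t s)
    moreover note alg1[OF t s st, of x]
    ultimately show "(F has_real_derivative x / (t\<^sup>2 + x\<^sup>2) * ((2 * x / pi) / (x\<^sup>2 + s\<^sup>2))) (at x)" by simp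
  next
    fix x :: real show "isCont (\<lambda>x. x / (t\<^sup>2 + x\<^sup>2) * ((2 * x / pi) / (x\<^sup>2 + s\<^sup>2))) x"
      using t s by (intro continuous_intros) (auto simp: add_pos_nonneg)
  next
    fix x :: real assume "x \<ge> 0" then show "0 \<le> x / (t\<^sup>2 + x\<^sup>2) * ((2 * x / pi) / (x\<^sup>2 + s\<^sup>2))"
      by (auto intro!: mult_nonneg_nonneg divide_nonneg_nonneg)
  next
    have "(F \<longlongrightarrow> (2/pi) * (s * (pi/2) - t * (pi/2)) / (s\<^sup>2 - t\<^sup>2)) at_top" unfolding F_def using t s st by (intro tendsto_intros arctan_div_at_top) auto
    moreover have "(2/pi) * (s * (pi/2) - t * (pi/2)) / (s\<^sup>2 - t\<^sup>2) = 1/(t+s)"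
    proof -
      have "(2/pi) * (s * (pi/2) - t * (pi/2)) = s - t" by (simp add: algebra_simps)
      moreover have "s\<^sup>2 - t\<^sup>2 = (s - t) * (t + s)" by (simp add: algebra_simps power2_eq_square)
      moreover have "s - t \<noteq> 0" using False by simp
      ultimately show ?thesis by simp
    qed
    ultimately show "(F \<longlongrightarrow> 1/(t+s)) at_top" by simp
  qed
  then show ?thesis by (simp add: F_def)
qed



lemma cot_digamma:
  fixes z :: complex
  assumes z: "z \<notin> \<int>"
  shows "(Digamma z - Digamma (1 - z)) * sin (of_real pi * z) + of_real pi * cos (of_real pi * z) = 0"
proof -
  define g where "g w = Gamma w * Gamma (1 - w) * sin (of_real pi * w)" for w :: complex
  have gw: "g w = of_real pi" if "w \<notin> \<int>" for w
  proof -
    from that have "sin (of_real pi * w) \<noteq> 0" by (subst sin_eq_0) auto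
    then show ?thesis unfolding g_def using Gamma_reflection_complex[of w] by (simp add: field_simps)
  qed
  have ev: "eventually (\<lambda>w. w \<in> UNIV - \<int>) (nhds z)"
    using z by (intro eventually_nhds_in_open) (auto simp: open_Diff)
  have "eventually (\<lambda>w. g w = of_real pi) (nhds z)"
    using ev by eventually_elim (use gw in auto)
  then have d0: "(g has_field_derivative 0) (at z)"
    by (subst DERIV_cong_ev[OF refl _ refl]) (auto intro: DERIV_const)
  have z1: "z \<notin> \<int>\<^sub>\<le>\<^sub>0" "1 - z \<notin> \<int>\<^sub>\<le>\<^sub>0"
    using z Ints_diff[of 1 "1 - z"] nonpos_Ints_subset_Ints by auto
  have "(g has_field_derivative Gamma z * Gamma (1 - z) * ((Digamma z - Digamma (1 - z)) * sin (of_real pi * z) + of_real pi * cos (of_real pi * z))) (at z)"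
    unfolding g_def using z1 by (auto intro!: derivative_eq_intros simp: algebra_simps)
  from DERIV_unique[OF this d0]
  have "Gamma z * Gamma (1 - z) * ((Digamma z - Digamma (1 - z)) * sin (of_real pi * z) + of_real pi * cos (of_real pi * z)) = 0" .
  moreover have "Gamma z \<noteq> 0" "Gamma (1 - z) \<noteq> 0" using z1 by (auto simp: Gamma_eq_zero_iff)
  ultimately show ?thesis by simp
qed


lemma sin_cos_half_i:
  fixes x :: real
  defines "z \<equiv> complex_of_real (1/2) + \<i> * complex_of_real x"
  shows "sin (of_real pi * z) = of_real (cosh (pi * x))"
    and "cos (of_real pi * z) = - \<i> * of_real (sinh (pi * x))"
proof -
  have pz: "of_real pi * z = complex_of_real (pi/2) + \<i> * complex_of_real (pi * x)"
    unfolding z_def by (simp add: algebra_simps)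
  have c: "cos (\<i> * complex_of_real y) = of_real (cosh y)" for y :: real
    by (simp add: cosh_real[symmetric] cosh_def exp_minus)
  have s: "sin (\<i> * complex_of_real y) = \<i> * of_real (sinh y)" for y :: real
    by (simp add: sin_i_times sinh_def exp_of_real exp_minus field_simps)
  have sc: "sin (complex_of_real (pi/2)) = 1" "cos (complex_of_real (pi/2)) = 0"
    using sin_of_real[of "pi/2"] cos_of_real[of "pi/2"] by simp_all
  show "sin (of_real pi * z) = of_real (cosh (pi * x))"
    unfolding pz sin_add c s sc by simp
  show "cos (of_real pi * z) = - \<i> * of_real (sinh (pi * x))"
    unfolding pz cos_add c s sc by simp
qed

lemma tanh_pfd:
  fixes x :: real
  shows "(\<lambda>k. (2 * x / pi) / (x\<^sup>2 + (real k + 1/2)\<^sup>2)) sums tanh (pi * x)"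
proof -
  define z where "z = complex_of_real (1/2) + \<i> * complex_of_real x"
  have zI: "z \<notin> \<int>"
  proof
    assume "z \<in> \<int>"
    then obtain n where "z = of_int n" by (auto elim: Ints_cases)
    then have "Re z = of_int n" by simp
    moreover have "Re z = 1/2" by (simp add: z_def)
    ultimately have "(of_int n :: real) = 1/2" by simp
    then have "2 * of_int n = (1::real)" by simp
    then have "2 * n = 1" by linarith
    then show False by presburger
  qed
  have z0: "z \<noteq> 0" "1 - z \<noteq> 0" using zI by auto
  have "(\<lambda>k. inverse (of_nat (Suc k)) - inverse (z + of_nat k)) sums (Digamma z + euler_mascheroni)"
    using summable_Digamma[OF z0(1)] by (simp add: Digamma_def summable_sums)
  moreover have "(\<lambda>k. inverse (of_nat (Suc k)) - inverse ((1 - z) + of_nat k)) sums (Digamma (1 - z) + euler_mascheroni)"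
    using summable_Digamma[OF z0(2)] by (simp add: Digamma_def summable_sums)
  ultimately have "(\<lambda>k. inverse ((1 - z) + of_nat k) - inverse (z + of_nat k)) sums (Digamma z - Digamma (1 - z))"
    by (drule_tac sums_diff) auto
  moreover have "inverse ((1 - z) + of_nat k) - inverse (z + of_nat k) = \<i> * of_real (pi * ((2 * x / pi) / (x\<^sup>2 + (real k + 1/2)\<^sup>2)))" for k
  proof -
    have pp: "pi * ((2 * x / pi) / (x\<^sup>2 + (real k + 1/2)\<^sup>2)) = 2 * x / (x\<^sup>2 + (real k + 1/2)\<^sup>2)" by simp
    define a where "a = real k + 1/2"
    have a: "a > 0" by (simp add: a_def)
    have e1: "(1 - z) + of_nat k = Complex a (-x)" by (simp add: z_def a_def complex_eq_iff)
    have e2: "z + of_nat k = Complex a x" by (simp add: z_def a_def complex_eq_iff)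
    have pos: "x\<^sup>2 + a\<^sup>2 > 0" using a by (simp add: add_nonneg_pos)
    have pi: "pi \<noteq> 0" by simp
    show ?thesis unfolding pp unfolding e1 e2 a_def[symmetric] using pos pi
      by (simp add: complex_eq_iff inverse_complex.ctr field_simps power2_eq_square)
  qed
  ultimately have A: "(\<lambda>k. \<i> * of_real (pi * ((2 * x / pi) / (x\<^sup>2 + (real k + 1/2)\<^sup>2)))) sums (Digamma z - Digamma (1 - z))"
    by simp
  have "cosh (pi * x) > 0" by simp
  from cot_digamma[OF zI] have "(Digamma z - Digamma (1 - z)) * of_real (cosh (pi * x)) = \<i> * of_real pi * of_real (sinh (pi * x))"
    unfolding z_def sin_cos_half_i by (simp add: algebra_simps)
  then have B: "Digamma z - Digamma (1 - z) = \<i> * of_real (pi * tanh (pi * x))"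
    using \<open>cosh (pi * x) > 0\<close> by (simp add: tanh_def field_simps)
  from A[unfolded B] have "(\<lambda>k. (-\<i>) * (\<i> * of_real (pi * ((2 * x / pi) / (x\<^sup>2 + (real k + 1/2)\<^sup>2))))) sums ((-\<i>) * (\<i> * of_real (pi * tanh (pi * x))))"
    by (rule sums_mult)
  then have "(\<lambda>k. of_real (pi * ((2 * x / pi) / (x\<^sup>2 + (real k + 1/2)\<^sup>2))) :: complex) sums of_real (pi * tanh (pi * x))"
    by simp
  then have "(\<lambda>k. pi * ((2 * x / pi) / (x\<^sup>2 + (real k + 1/2)\<^sup>2))) sums (pi * tanh (pi * x))"
    by (simp only: sums_of_real_iff)
  then have "(\<lambda>k. pi * ((2 * x / pi) / (x\<^sup>2 + (real k + 1/2)\<^sup>2)) / pi) sums (pi * tanh (pi * x) / pi)"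
    by (rule sums_divide)
  then show ?thesis by (simp add: mult.commute)
qed


definition pk :: "real \<Rightarrow> real \<Rightarrow> real" where "pk s x = (2*x/pi)/(x\<^sup>2+s\<^sup>2)"
definition SS :: "nat \<Rightarrow> real \<Rightarrow> real" where "SS M y = (\<Sum>k<M. pk (real k + 1/2) y)"
definition RR :: "nat \<Rightarrow> real \<Rightarrow> real" where "RR N x = SS (N*N) (real N * x)"

lemma pk_nonneg: "x \<ge> 0 \<Longrightarrow> pk s x \<ge> 0"
  by (simp add: pk_def)

lemma pk_sums: "(\<lambda>k. pk (real k + 1/2) y) sums tanh (pi * y)"
  using tanh_pfd[of y] by (simp add: pk_def)

lemma SS_le: "y \<ge> 0 \<Longrightarrow> SS M y \<le> tanh (pi * y)"
  unfolding SS_def using pk_sums[of y] pk_nonneg[of y]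
  by (metis sums_iff sum_le_suminf finite_lessThan)

lemma SS_nonneg: "y \<ge> 0 \<Longrightarrow> SS M y \<ge> 0"
  unfolding SS_def by (intro sum_nonneg pk_nonneg)

lemma SS_lt1: "y \<ge> 0 \<Longrightarrow> SS M y < 1"
  using SS_le[of y M] tanh_real_lt_1[of "pi*y"] by linarith

lemma pk_scale: "N > 0 \<Longrightarrow> pk a (real N * x) = (1 / real N) * pk (a / real N) x"
  by (simp add: pk_def field_simps power2_eq_square)

lemma sum_square_reindex:
  fixes g :: "nat \<Rightarrow> real"
  shows "(\<Sum>k<N*N. g k) = (\<Sum>j<N. \<Sum>i<N. g (j*N + i))"
proof -
  have "(\<Sum>k<M*N. g k) = (\<Sum>j<M. \<Sum>i<N. g (j*N + i))" for M
  proof (induction M)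
    case (Suc M)
    have e: "{..<Suc M * N} = {..<M*N} \<union> {M*N..<M*N+N}" by auto
    have "(\<Sum>k<Suc M * N. g k) = (\<Sum>k\<in>{..<M*N} \<union> {M*N..<M*N+N}. g k)" by (simp only: e)
    also have "\<dots> = (\<Sum>k<M*N. g k) + (\<Sum>k\<in>{M*N..<M*N+N}. g k)"
      by (subst sum.union_disjoint) auto
    finally have "(\<Sum>k<Suc M * N. g k) = (\<Sum>k<M*N. g k) + (\<Sum>k\<in>{M*N..<M*N+N}. g k)" .
    also have "(\<Sum>k\<in>{M*N..<M*N+N}. g k) = (\<Sum>i=0..<N. g (i + M*N))"
      using sum.shift_bounds_nat_ivl[of g 0 "M*N" N] by (simp add: add.commute)
    also have "\<dots> = (\<Sum>i<N. g (M*N + i))" by (simp add: atLeast0LessThan add.commute)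
    finally show ?case using Suc by simp
  qed simp
  then show ?thesis .
qed

lemma sum_half: "(\<Sum>i<N. ((real i + 1/2) / real N - 1/2)) = 0"
proof (cases "N = 0")
  case False
  have "(\<Sum>i<N. (real i + 1/2)) = real N * real N / 2"
    by (induction N) (simp_all add: field_simps)
  then have "(\<Sum>i<N. ((real i + 1/2) / real N - 1/2)) = real N * real N / 2 / real N - real N / 2"
    by (simp add: sum_subtractf sum_divide_distrib[symmetric])
  then show ?thesis using False by simp
qed simp

lemma D_block:
  assumes N: "N > 0"
  shows "RR N x - SS N x = (\<Sum>j<N. (1 / real N) * (\<Sum>i<N. pk (real j + (real i + 1/2) / real N) x - pk (real j + 1/2) x))"
proof -
  have "RR N x = (\<Sum>j<N. \<Sum>i<N. pk (real (j*N+i) + 1/2) (real N * x))"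
    unfolding RR_def SS_def by (rule sum_square_reindex)
  also have "\<dots> = (\<Sum>j<N. \<Sum>i<N. (1 / real N) * pk (real j + (real i + 1/2) / real N) x)"
  proof (intro sum.cong refl)
    fix j i
    have "(real (j*N+i) + 1/2) / real N = real j + (real i + 1/2) / real N"
      using N by (simp add: field_simps)
    then show "pk (real (j*N+i) + 1/2) (real N * x) = (1 / real N) * pk (real j + (real i + 1/2) / real N) x"
      using pk_scale[OF N] by simp
  qed
  finally have 1: "RR N x = (\<Sum>j<N. (1 / real N) * (\<Sum>i<N. pk (real j + (real i + 1/2) / real N) x))"
    by (simp add: sum_distrib_left)
  have 2: "SS N x = (\<Sum>j<N. (1 / real N) * (\<Sum>i<N. pk (real j + 1/2) x))"
    unfolding SS_def using N by simp
  show ?thesis unfolding 1 2 using N by (simp add: sum_subtractf diff_divide_distrib)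
qed

lemma pk_taylor:
  fixes x s m :: real
  assumes x: "x > 0" and m: "m \<ge> 1/2" and sm: "\<bar>s - m\<bar> \<le> 1/2"
  shows "\<bar>pk s x - pk m x + (2*x/pi) * (2*m/(x\<^sup>2+m\<^sup>2)\<^sup>2) * (s - m)\<bar> \<le> 5 / (4 * x\<^sup>2) * pk m x"
proof -
  have A: "x\<^sup>2 + s\<^sup>2 > 0" "x\<^sup>2 + m\<^sup>2 > 0" using x by (simp_all add: add_pos_nonneg)
  define P where "P = x\<^sup>2 + s\<^sup>2"
  define Q where "Q = x\<^sup>2 + m\<^sup>2"
  have PQ: "P > 0" "Q > 0" using A by (simp_all add: P_def Q_def)
  have eq: "pk s x - pk m x + (2*x/pi) * (2*m/(x\<^sup>2+m\<^sup>2)\<^sup>2) * (s - m)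
      = (2*x/pi) * ((s-m)\<^sup>2 * (m*(2 * s + m) - x\<^sup>2) / ((x\<^sup>2+s\<^sup>2) * (x\<^sup>2+m\<^sup>2)\<^sup>2))"
  proof -
    have "1/P - 1/Q + 2*m*(s-m)/Q\<^sup>2 = (Q * Q - P * Q + 2*m*(s-m)*P) / (P * Q\<^sup>2)"
      using PQ by (simp add: field_simps power2_eq_square)
    also have "Q * Q - P * Q + 2*m*(s-m)*P = (s-m)\<^sup>2 * (m*(2 * s + m) - x\<^sup>2)"
      unfolding P_def Q_def by (simp add: algebra_simps power2_eq_square)
    finally have "1/P - 1/Q + 2*m*(s-m)/Q\<^sup>2 = (s-m)\<^sup>2 * (m*(2 * s + m) - x\<^sup>2) / (P * Q\<^sup>2)" .
    moreover have "pk s x - pk m x + (2*x/pi) * (2*m/(x\<^sup>2+m\<^sup>2)\<^sup>2) * (s - m) = (2*x/pi) * (1/P - 1/Q + 2*m*(s-m)/Q\<^sup>2)"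
      unfolding pk_def P_def[symmetric] Q_def[symmetric] by (simp add: algebra_simps diff_divide_distrib)
    ultimately show ?thesis unfolding P_def Q_def by simp
  qed
  have s0: "s \<ge> 0" "s \<le> 2*m" using sm m by (auto simp: abs_if split: if_splits)
  have n1: "\<bar>m*(2 * s + m) - x\<^sup>2\<bar> \<le> 5 * (x\<^sup>2+m\<^sup>2)"
  proof -
    have "m*(2 * s + m) \<le> m * (5*m)" using s0 m by (intro mult_left_mono) auto
    then have h1: "2*(m* s) + m*m \<le> 5*(m*m)" by (simp add: algebra_simps)
    have "m*(2 * s + m) \<ge> 0" using s0 m by simp
    then have h2: "0 \<le> 2*(m* s) + m*m" by (simp add: algebra_simps)
    have "\<bar>2*(m* s) + m*m - x*x\<bar> \<le> 5 * (x*x + m*m)"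
      using h1 h2 zero_le_square[of x] by (smt (verit))
    moreover have "m*(2 * s + m) - x\<^sup>2 = 2*(m* s) + m*m - x*x" by (simp add: algebra_simps power2_eq_square)
    ultimately show ?thesis by (simp add: power2_eq_square)
  qed
  have n2: "(s-m)\<^sup>2 \<le> 1/4"
  proof -
    have "(s-m)\<^sup>2 = \<bar>s-m\<bar>\<^sup>2" by simp
    also have "\<dots> \<le> (1/2)\<^sup>2" by (rule power_mono[OF sm]) simp
    finally show ?thesis by (simp add: power2_eq_square)
  qed
  have "\<bar>(s-m)\<^sup>2 * (m*(2 * s + m) - x\<^sup>2)\<bar> \<le> 1/4 * (5 * (x\<^sup>2+m\<^sup>2))"
    unfolding abs_mult using n1 n2 by (intro mult_mono) auto
  moreover have "(x\<^sup>2+s\<^sup>2) * (x\<^sup>2+m\<^sup>2)\<^sup>2 \<ge> x\<^sup>2 * (x\<^sup>2+m\<^sup>2)\<^sup>2"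
    by (intro mult_right_mono) auto
  ultimately have "\<bar>(s-m)\<^sup>2 * (m*(2 * s + m) - x\<^sup>2) / ((x\<^sup>2+s\<^sup>2) * (x\<^sup>2+m\<^sup>2)\<^sup>2)\<bar>
       \<le> (1/4 * (5 * (x\<^sup>2+m\<^sup>2))) / (x\<^sup>2 * (x\<^sup>2+m\<^sup>2)\<^sup>2)"
    using A x unfolding abs_divide
    by (intro frac_le) (auto simp: abs_mult)
  also have "\<dots> = 5 / (4 * x\<^sup>2) / (x\<^sup>2+m\<^sup>2)"
  proof -
    have "(1/4 * (5 * Q)) / (x\<^sup>2 * Q\<^sup>2) = 5 / (4 * x\<^sup>2) / Q"
      using PQ x by (simp add: field_simps power2_eq_square)
    then show ?thesis by (simp add: Q_def)
  qed
  finally have B: "\<bar>(s-m)\<^sup>2 * (m*(2 * s + m) - x\<^sup>2) / ((x\<^sup>2+s\<^sup>2) * (x\<^sup>2+m\<^sup>2)\<^sup>2)\<bar> \<le> 5 / (4 * x\<^sup>2) / (x\<^sup>2+m\<^sup>2)" .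
  have "\<bar>pk s x - pk m x + (2*x/pi) * (2*m/(x\<^sup>2+m\<^sup>2)\<^sup>2) * (s - m)\<bar>
      = (2*x/pi) * \<bar>(s-m)\<^sup>2 * (m*(2 * s + m) - x\<^sup>2) / ((x\<^sup>2+s\<^sup>2) * (x\<^sup>2+m\<^sup>2)\<^sup>2)\<bar>"
    unfolding eq using x by (simp add: abs_mult)
  also have "\<dots> \<le> (2*x/pi) * (5 / (4 * x\<^sup>2) / (x\<^sup>2+m\<^sup>2))"
    using B x by (intro mult_left_mono) auto
  also have "\<dots> = 5 / (4 * x\<^sup>2) * pk m x" by (simp add: pk_def)
  finally show ?thesis .
qed

lemma D_bound:
  assumes N: "N > 0" and x: "x > 0"
  shows "\<bar>RR N x - SS N x\<bar> \<le> 5 / (4 * x\<^sup>2)"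
proof -
  define L where "L j = (2*x/pi) * (2*(real j + 1/2)/(x\<^sup>2+(real j + 1/2)\<^sup>2)\<^sup>2)" for j
  have inner: "\<bar>\<Sum>i<N. pk (real j + (real i + 1/2) / real N) x - pk (real j + 1/2) x\<bar>
        \<le> real N * (5 / (4 * x\<^sup>2) * pk (real j + 1/2) x)" for j
  proof -
    have "(\<Sum>i<N. pk (real j + (real i + 1/2) / real N) x - pk (real j + 1/2) x)
        = (\<Sum>i<N. pk (real j + (real i + 1/2) / real N) x - pk (real j + 1/2) x + L j * ((real j + (real i + 1/2) / real N) - (real j + 1/2)))
          - L j * (\<Sum>i<N. ((real i + 1/2) / real N - 1/2))"
      by (simp add: sum.distrib sum_subtractf sum_distrib_left algebra_simps)
    also have "(\<Sum>i<N. ((real i + 1/2) / real N - 1/2)) = 0" by (rule sum_half)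
    finally have "\<bar>\<Sum>i<N. pk (real j + (real i + 1/2) / real N) x - pk (real j + 1/2) x\<bar>
        \<le> (\<Sum>i<N. \<bar>pk (real j + (real i + 1/2) / real N) x - pk (real j + 1/2) x + L j * ((real j + (real i + 1/2) / real N) - (real j + 1/2))\<bar>)"
      by (simp add: sum_abs)
    also have "\<dots> \<le> (\<Sum>i<N. 5 / (4 * x\<^sup>2) * pk (real j + 1/2) x)"
    proof (intro sum_mono)
      fix i assume i: "i \<in> {..<N}"
      have "\<bar>(real j + (real i + 1/2) / real N) - (real j + 1/2)\<bar> \<le> 1/2"
      proof -
        define u where "u = (real i + 1/2) / real N"
        have "u \<ge> 0" by (simp add: u_def)
        moreover have "u \<le> 1" using i N by (simp add: field_simps u_def)
        ultimately have "\<bar>u - 1/2\<bar> \<le> 1/2" by (auto simp: abs_if)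
        then show ?thesis by (simp add: u_def)
      qed
      note h = this
      show "\<bar>pk (real j + (real i + 1/2) / real N) x - pk (real j + 1/2) x + L j * ((real j + (real i + 1/2) / real N) - (real j + 1/2))\<bar>
          \<le> 5 / (4 * x\<^sup>2) * pk (real j + 1/2) x"
        unfolding L_def by (rule pk_taylor[OF x _ h]) simp
    qed
    also have "\<dots> = real N * (5 / (4 * x\<^sup>2) * pk (real j + 1/2) x)" by simp
    finally show ?thesis .
  qed
  have "\<bar>RR N x - SS N x\<bar> \<le> (\<Sum>j<N. \<bar>(1 / real N) * (\<Sum>i<N. pk (real j + (real i + 1/2) / real N) x - pk (real j + 1/2) x)\<bar>)"
    unfolding D_block[OF N] by (rule sum_abs)
  also have "\<dots> \<le> (\<Sum>j<N. 5 / (4 * x\<^sup>2) * pk (real j + 1/2) x)"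
  proof (intro sum_mono)
    fix j
    have "\<bar>(1 / real N) * (\<Sum>i<N. pk (real j + (real i + 1/2) / real N) x - pk (real j + 1/2) x)\<bar>
        = (1 / real N) * \<bar>\<Sum>i<N. pk (real j + (real i + 1/2) / real N) x - pk (real j + 1/2) x\<bar>"
      by (simp add: abs_mult)
    also have "\<dots> \<le> (1 / real N) * (real N * (5 / (4 * x\<^sup>2) * pk (real j + 1/2) x))"
      by (intro mult_left_mono inner) simp
    also have "\<dots> = 5 / (4 * x\<^sup>2) * pk (real j + 1/2) x" using N by simp
    finally show "\<bar>(1 / real N) * (\<Sum>i<N. pk (real j + (real i + 1/2) / real N) x - pk (real j + 1/2) x)\<bar>
        \<le> 5 / (4 * x\<^sup>2) * pk (real j + 1/2) x" .
  qed
  also have "\<dots> = 5 / (4 * x\<^sup>2) * SS N x" by (simp add: SS_def sum_distrib_left)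
  also have "\<dots> \<le> 5 / (4 * x\<^sup>2) * 1"
    using SS_lt1[of x N] x by (intro mult_left_mono) auto
  finally show ?thesis by simp
qed


lemma pk_tail_step:
  assumes y: "y \<ge> 0" and k: "k \<ge> 1"
  shows "pk (real k + 1/2) y \<le> (2*y/pi) * (1/real k - 1/real (Suc k))"
proof -
  have "pk (real k + 1/2) y = (2*y/pi) / (y\<^sup>2 + (real k + 1/2)\<^sup>2)" by (simp add: pk_def)
  also have "\<dots> \<le> (2*y/pi) / (real k * real (Suc k))"
  proof (rule divide_left_mono)
    have "real k * real (Suc k) \<le> (real k + 1/2)\<^sup>2" by (simp add: power2_eq_square algebra_simps)
    then show "real k * real (Suc k) \<le> y\<^sup>2 + (real k + 1/2)\<^sup>2" by (simp add: add_increasing)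
    show "0 \<le> 2 * y / pi" using y by simp
    show "0 < (y\<^sup>2 + (real k + 1 / 2)\<^sup>2) * (real k * real (Suc k))" using k
      by (intro mult_pos_pos) (auto simp: add_nonneg_pos)
  qed
  also have "\<dots> = (2*y/pi) * (1/real k - 1/real (Suc k))" using k by (simp add: field_simps)
  finally show ?thesis .
qed

lemma SS_tail:
  assumes y: "y \<ge> 0" and M: "M \<ge> 1"
  shows "tanh (pi * y) - SS M y \<le> (2*y/pi) / real M"
proof -
  have step: "SS (M + L) y - SS M y \<le> (2*y/pi) * (1/real M - 1/real (M + L))" for L
  proof (induction L)
    case (Suc L)
    have "SS (M + Suc L) y - SS M y = (SS (M + L) y - SS M y) + pk (real (M + L) + 1/2) y"
      by (simp add: SS_def)
    also have "\<dots> \<le> (2*y/pi) * (1/real M - 1/real (M + L)) + (2*y/pi) * (1/real (M+L) - 1/real (Suc (M+L)))"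
      using Suc pk_tail_step[OF y, of "M+L"] M by (intro add_mono) auto
    also have "\<dots> = (2*y/pi) * (1/real M - 1/real (M + Suc L))" by (simp add: algebra_simps)
    finally show ?case .
  qed simp
  have lim: "(\<lambda>L. SS (L + M) y - SS M y) \<longlonglongrightarrow> tanh (pi * y) - SS M y"
  proof -
    have "(\<lambda>n. SS n y) \<longlonglongrightarrow> tanh (pi * y)"
      using pk_sums[of y] unfolding SS_def sums_def by simp
    then have "(\<lambda>L. SS (L + M) y) \<longlonglongrightarrow> tanh (pi * y)"
      by (rule LIMSEQ_ignore_initial_segment)
    then show ?thesis by (intro tendsto_diff tendsto_const)
  qed
  show ?thesis
  proof (rule LIMSEQ_le_const2[OF lim], intro exI allI impI)
    fix L :: nat
    have "SS (L + M) y - SS M y \<le> (2*y/pi) * (1/real M - 1/real (M + L))"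
      using step[of L] by (simp add: add.commute)
    also have "\<dots> \<le> (2*y/pi) * (1/real M)" using y M by (intro mult_left_mono) auto
    finally show "SS (L + M) y - SS M y \<le> (2*y/pi) / real M" by simp
  qed
qed

lemma RR_lim:
  assumes x: "x > 0"
  shows "(\<lambda>N. RR N x) \<longlonglongrightarrow> 1"
proof (rule tendsto_sandwich)
  show "eventually (\<lambda>N. tanh (pi * (real N * x)) - (2 * (real N * x) / pi) / real (N*N) \<le> RR N x) sequentially"
    using eventually_ge_at_top[of 1]
  proof eventually_elim
    case (elim N)
    then have "N * N \<ge> 1" by simp
    from SS_tail[of "real N * x" "N*N", OF _ this] x show ?case by (simp add: RR_def)
  qed
  show "eventually (\<lambda>N. RR N x \<le> 1) sequentially"
    using SS_lt1 x by (auto simp: RR_def less_imp_le)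
  show "(\<lambda>N. 1) \<longlonglongrightarrow> (1::real)" by simp
  have "(\<lambda>N. tanh (pi * (real N * x))) \<longlonglongrightarrow> 1"
  proof (rule filterlim_compose[OF tanh_real_at_top])
    show "filterlim (\<lambda>N. pi * (real N * x)) at_top sequentially"
      using x by (intro filterlim_tendsto_pos_mult_at_top[OF tendsto_const] filterlim_at_top_mult_tendsto_pos[OF tendsto_const] filterlim_real_sequentially) auto
  qed
  moreover have "(\<lambda>N. (2 * (real N * x) / pi) / real (N*N)) \<longlonglongrightarrow> 0"
  proof -
    have ev: "eventually (\<lambda>N. (2 * x / pi) * inverse (real N) = (2 * (real N * x) / pi) / real (N*N)) sequentially"
      using eventually_ge_at_top[of 1] by eventually_elim (simp add: field_simps)
    have "(\<lambda>N. (2 * x / pi) * inverse (real N)) \<longlonglongrightarrow> 0"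
      using tendsto_mult[OF tendsto_const[of "2*x/pi"] lim_inverse_n] by simp
    from Lim_transform_eventually[OF this ev] show ?thesis .
  qed
  ultimately have "(\<lambda>N. tanh (pi * (real N * x)) - (2 * (real N * x) / pi) / real (N*N)) \<longlonglongrightarrow> 1 - 0"
    by (rule tendsto_diff)
  then show "(\<lambda>N. tanh (pi * (real N * x)) - (2 * (real N * x) / pi) / real (N*N)) \<longlonglongrightarrow> 1" by simp
qed


lemma sum_inv_lower:
  fixes z :: real assumes z: "z > 0"
  shows "ln (z + real M) - ln z \<le> (\<Sum>k<M. inverse (z + real k))"
proof -
  have "(\<Sum>k<M. ln (z + real (Suc k)) - ln (z + real k)) \<le> (\<Sum>k<M. inverse (z + real k))"
  proof (intro sum_mono)
    fix k
    have p: "z + real k > 0" using z by simp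
    have "1 + 1 / (z + real k) = (z + real (Suc k)) / (z + real k)" using p by (simp add: field_simps)
    then have "ln (1 + 1 / (z + real k)) = ln (z + real (Suc k)) - ln (z + real k)"
      using p by (simp add: ln_div)
    then have "ln (z + real (Suc k)) - ln (z + real k) = ln (1 + 1 / (z + real k))" by simp
    also have "\<dots> \<le> 1 / (z + real k)" by (rule ln_add_one_self_le_self) (use p in simp)
    finally show "ln (z + real (Suc k)) - ln (z + real k) \<le> inverse (z + real k)"
      by (simp add: inverse_eq_divide)
  qed
  moreover have "(\<Sum>k<M. ln (z + real (Suc k)) - ln (z + real k)) = ln (z + real M) - ln z"
    using sum_lessThan_telescope[of "\<lambda>k. ln (z + real k)" M] by simp
  ultimately show ?thesis by simp
qed

lemma sum_inv_upper:
  fixes z :: real assumes z: "z > 0" and M: "M \<ge> 1"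
  shows "(\<Sum>k<M. inverse (z + real k)) \<le> 1 / z + ln (z + real M - 1) - ln z"
proof -
  obtain M' where M': "M = Suc M'" using M by (cases M) auto
  have "(\<Sum>k<M. inverse (z + real k)) = inverse z + (\<Sum>k<M'. inverse (z + real (Suc k)))"
    unfolding M' sum.lessThan_Suc_shift by simp
  also have "(\<Sum>k<M'. inverse (z + real (Suc k))) \<le> (\<Sum>k<M'. ln (z + real (Suc k)) - ln (z + real k))"
  proof (intro sum_mono)
    fix k
    have p: "z + real k > 0" using z by simp
    have "ln ((z + real k) / (z + real (Suc k))) \<le> (z + real k) / (z + real (Suc k)) - 1"
      by (rule ln_le_minus_one) (use p in simp)
    also have "\<dots> = - inverse (z + real (Suc k))" using p by (simp add: field_simps)
    finally show "inverse (z + real (Suc k)) \<le> ln (z + real (Suc k)) - ln (z + real k)"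
      using p by (simp add: ln_div)
  qed
  also have "(\<Sum>k<M'. ln (z + real (Suc k)) - ln (z + real k)) = ln (z + real M') - ln z"
    using sum_lessThan_telescope[of "\<lambda>k. ln (z + real k)" M'] by simp
  finally show ?thesis using M' by (simp add: inverse_eq_divide)
qed

lemma A_lim:
  fixes t :: real assumes t: "t > 0"
  shows "(\<lambda>N. (\<Sum>k<N*N. inverse ((real N * t + 1/2) + real k)) - ln (real N)) \<longlonglongrightarrow> - ln t"
proof (rule tendsto_sandwich)
  show "eventually (\<lambda>N. ln (real N * t + 1/2 + real N * real N) - ln (real N * t + 1/2) - ln (real N)
      \<le> (\<Sum>k<N*N. inverse ((real N * t + 1/2) + real k)) - ln (real N)) sequentially"
  proof (intro always_eventually allI)
    fix N :: nat
    have "real N * t + 1/2 > 0" using t by (simp add: add_nonneg_pos)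
    from sum_inv_lower[OF this, of "N*N"]
    show "ln (real N * t + 1/2 + real N * real N) - ln (real N * t + 1/2) - ln (real N)
      \<le> (\<Sum>k<N*N. inverse ((real N * t + 1/2) + real k)) - ln (real N)" by simp
  qed
  show "eventually (\<lambda>N. (\<Sum>k<N*N. inverse ((real N * t + 1/2) + real k)) - ln (real N)
      \<le> 1 / (real N * t + 1/2) + ln (real N * t + 1/2 + real N * real N - 1) - ln (real N * t + 1/2) - ln (real N)) sequentially"
    using eventually_ge_at_top[of 1]
  proof eventually_elim
    case (elim N)
    then have "N * N \<ge> 1" by simp
    have "real N * t + 1/2 > 0" using t by (simp add: add_nonneg_pos)
    from sum_inv_upper[OF this \<open>N * N \<ge> 1\<close>] show ?case by simp
  qed
  show "(\<lambda>N. ln (real N * t + 1/2 + real N * real N) - ln (real N * t + 1/2) - ln (real N)) \<longlonglongrightarrow> - ln t"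
    using t by real_asymp
  show "(\<lambda>N. 1 / (real N * t + 1/2) + ln (real N * t + 1/2 + real N * real N - 1) - ln (real N * t + 1/2) - ln (real N)) \<longlonglongrightarrow> - ln t"
    using t by real_asymp
qed


lemma sum_even_odd: "(\<Sum>n<2*m. g n) = (\<Sum>j<m. g (2*j) + g (2*j+1))" for g :: "nat \<Rightarrow> real"
  by (induction m) (simp_all add: sum.distrib)

lemma dbeta_lim:
  fixes x :: real assumes x: "x > 0"
  shows "(\<lambda>m. \<Sum>n<2*m. (-1)^n / (x + real n)) \<longlonglongrightarrow> dbeta x"
proof -
  have a0: "(\<lambda>n. 1 / (x + real n)) \<longlonglongrightarrow> 0"
  proof -
    have "(\<lambda>n. 1 / (x + real n)) = (\<lambda>n. inverse (x + real n))" by (simp add: inverse_eq_divide)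
    moreover have "(\<lambda>n. inverse (x + real n)) \<longlonglongrightarrow> 0"
      by (intro tendsto_inverse_0_at_top filterlim_tendsto_add_at_top[OF tendsto_const] filterlim_real_sequentially)
    ultimately show ?thesis by simp
  qed
  have "summable (\<lambda>n. (-1)^n * (1 / (x + real n)))"
    by (rule summable_Leibniz'(1)[OF a0]) (use x in \<open>auto simp: frac_le\<close>)
  then have s: "summable (\<lambda>n. (-1)^n / (x + real n))" by simp
  then have "(\<lambda>n. \<Sum>k<n. (-1)^k / (x + real k)) \<longlonglongrightarrow> dbeta x"
    unfolding dbeta_def by (simp add: summable_LIMSEQ)
  from LIMSEQ_subseq_LIMSEQ[OF this, of "\<lambda>m. 2*m"]
  show ?thesis by (simp add: strict_mono_def o_def)
qed

lemma dbeta_identity: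
  fixes t :: real assumes t: "t > 0"
  shows "Digamma (2 * t) + dbeta (2 * t) - ln (2 * t) = Digamma (t + 1/2) - ln t"
proof -
  have A: "(\<lambda>m. (ln (real (2*m)) - (\<Sum>n<2*m. inverse (2*t + of_nat n))) + (\<Sum>n<2*m. (-1)^n / (2*t + real n)))
           \<longlonglongrightarrow> Digamma (2*t) + dbeta (2*t)"
  proof (intro tendsto_add dbeta_lim)
    have "(\<lambda>m. ln (real m) - (\<Sum>n<m. inverse (2*t + of_nat n))) \<longlonglongrightarrow> Digamma (2*t)"
      using Digamma_LIMSEQ[of "2*t"] t by simp
    from LIMSEQ_subseq_LIMSEQ[OF this, of "\<lambda>m. 2*m"]
    show "(\<lambda>m. ln (real (2*m)) - (\<Sum>n<2*m. inverse (2*t + of_nat n))) \<longlonglongrightarrow> Digamma (2*t)"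
      by (simp add: strict_mono_def o_def)
  qed (use t in simp)
  have B: "(\<lambda>m. ln 2 + (ln (real m) - (\<Sum>n<m. inverse ((t + 1/2) + of_nat n)))) \<longlonglongrightarrow> ln 2 + Digamma (t + 1/2)"
    using Digamma_LIMSEQ[of "t + 1/2"] t by (intro tendsto_add tendsto_const) simp
  have eq: "(ln (real (2*m)) - (\<Sum>n<2*m. inverse (2*t + of_nat n))) + (\<Sum>n<2*m. (-1)^n / (2*t + real n))
        = ln 2 + (ln (real m) - (\<Sum>n<m. inverse ((t + 1/2) + of_nat n)))" if m: "m \<ge> 1" for m
  proof -
    have "ln (real (2*m)) = ln 2 + ln (real m)" using m by (simp add: ln_mult)
    moreover have "(\<Sum>n<2*m. (-1)^n / (2*t + real n)) - (\<Sum>n<2*m. inverse (2*t + of_nat n))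
          = - (\<Sum>n<m. inverse ((t + 1/2) + of_nat n))"
    proof -
      have "(\<Sum>n<2*m. (-1)^n / (2*t + real n)) - (\<Sum>n<2*m. inverse (2*t + of_nat n))
          = (\<Sum>n<2*m. (-1)^n / (2*t + real n) - inverse (2*t + of_nat n))"
        by (simp add: sum_subtractf)
      also have "\<dots> = (\<Sum>j<m. ((-1)^(2*j) / (2*t + real (2*j)) - inverse (2*t + of_nat (2*j)))
                   + ((-1)^(2*j+1) / (2*t + real (2*j+1)) - inverse (2*t + of_nat (2*j+1))))"
        by (rule sum_even_odd)
      also have "\<dots> = (\<Sum>j<m. - inverse ((t + 1/2) + of_nat j))"
      proof (rule sum.cong[OF refl])
        fix j assume "j \<in> {..<m}"
        have p: "2*t + 2 * real j + 1 > 0" using t by simp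
        show "((-1)^(2*j) / (2*t + real (2*j)) - inverse (2*t + of_nat (2*j)))
                   + ((-1)^(2*j+1) / (2*t + real (2*j+1)) - inverse (2*t + of_nat (2*j+1)))
              = - inverse ((t + 1/2) + of_nat j)"
          using p by (simp add: inverse_eq_divide field_simps)
      qed
      finally show ?thesis by (simp add: sum_negf)
    qed
    ultimately show ?thesis by simp
  qed
  have "eventually (\<lambda>m. (ln (real (2*m)) - (\<Sum>n<2*m. inverse (2*t + of_nat n))) + (\<Sum>n<2*m. (-1)^n / (2*t + real n))
        = ln 2 + (ln (real m) - (\<Sum>n<m. inverse ((t + 1/2) + of_nat n)))) sequentially"
    using eventually_ge_at_top[of 1] by eventually_elim (rule eq)
  from Lim_transform_eventually[OF A this] B
  have "Digamma (2*t) + dbeta (2*t) = ln 2 + Digamma (t + 1/2)" by (rule LIMSEQ_unique)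
  moreover have "ln (2*t) = ln 2 + ln t" using t by (simp add: ln_mult)
  ultimately show ?thesis by simp
qed


lemma int_qpk:
  assumes t: "t > 0" and s: "s > 0"
  shows "((\<lambda>x. x / (t\<^sup>2 + x\<^sup>2) * pk s x) has_integral 1 / (t + s)) {0..}"
  using int_qf[OF t s] by (simp add: pk_def)

lemma int_qD:
  assumes t: "t > 0" and N: "N > 0"
  shows "((\<lambda>x. x / (t\<^sup>2 + x\<^sup>2) * (RR N x - SS N x)) has_integral
     ((\<Sum>k<N*N. inverse ((real N * t + 1/2) + real k)) - (\<Sum>k<N. inverse ((t + 1/2) + real k)))) {0..}"
proof -
  have R: "((\<lambda>x. \<Sum>k<N*N. x / (t\<^sup>2 + x\<^sup>2) * pk (real k + 1/2) (real N * x)) has_integral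
      (\<Sum>k<N*N. inverse ((real N * t + 1/2) + real k))) {0..}"
  proof (intro has_integral_sum finite_lessThan)
    fix k assume "k \<in> {..<N*N}"
    have "((\<lambda>x. (1 / real N) * (x / (t\<^sup>2 + x\<^sup>2) * pk ((real k + 1/2) / real N) x)) has_integral
          (1 / real N) * (1 / (t + (real k + 1/2) / real N))) {0..}"
      by (intro has_integral_mult_right int_qpk t) (use N in simp)
    moreover have "(1 / real N) * (1 / (t + (real k + 1/2) / real N)) = inverse ((real N * t + 1/2) + real k)"
      using N t by (simp add: field_simps)
    moreover have "(1 / real N) * (x / (t\<^sup>2 + x\<^sup>2) * pk ((real k + 1/2) / real N) x)
        = x / (t\<^sup>2 + x\<^sup>2) * pk (real k + 1/2) (real N * x)" for x
      using pk_scale[OF N, of "real k + 1/2" x] by simp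
    ultimately show "((\<lambda>x. x / (t\<^sup>2 + x\<^sup>2) * pk (real k + 1/2) (real N * x)) has_integral
          inverse ((real N * t + 1/2) + real k)) {0..}" by simp
  qed
  have S: "((\<lambda>x. \<Sum>k<N. x / (t\<^sup>2 + x\<^sup>2) * pk (real k + 1/2) x) has_integral
      (\<Sum>k<N. inverse ((t + 1/2) + real k))) {0..}"
  proof (intro has_integral_sum finite_lessThan)
    fix k assume "k \<in> {..<N}"
    have "((\<lambda>x. x / (t\<^sup>2 + x\<^sup>2) * pk (real k + 1/2) x) has_integral 1 / (t + (real k + 1/2))) {0..}"
      by (intro int_qpk t) simp
    then show "((\<lambda>x. x / (t\<^sup>2 + x\<^sup>2) * pk (real k + 1/2) x) has_integral inverse ((t + 1/2) + real k)) {0..}"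
      by (simp add: inverse_eq_divide add_ac)
  qed
  have "((\<lambda>x. (\<Sum>k<N*N. x / (t\<^sup>2 + x\<^sup>2) * pk (real k + 1/2) (real N * x)) - (\<Sum>k<N. x / (t\<^sup>2 + x\<^sup>2) * pk (real k + 1/2) x)) has_integral
     ((\<Sum>k<N*N. inverse ((real N * t + 1/2) + real k)) - (\<Sum>k<N. inverse ((t + 1/2) + real k)))) {0..}"
    by (rule has_integral_diff[OF R S])
  moreover have "(\<Sum>k<N*N. x / (t\<^sup>2 + x\<^sup>2) * pk (real k + 1/2) (real N * x)) - (\<Sum>k<N. x / (t\<^sup>2 + x\<^sup>2) * pk (real k + 1/2) x)
      = x / (t\<^sup>2 + x\<^sup>2) * (RR N x - SS N x)" for x
    by (simp add: RR_def SS_def sum_distrib_left right_diff_distrib)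
  ultimately show ?thesis by simp
qed

lemma V_lim:
  assumes t: "t > 0"
  shows "(\<lambda>N. (\<Sum>k<N*N. inverse ((real N * t + 1/2) + real k)) - (\<Sum>k<N. inverse ((t + 1/2) + real k)))
     \<longlonglongrightarrow> Digamma (t + 1/2) - ln t"
proof -
  have B: "(\<lambda>N. ln (real N) - (\<Sum>k<N. inverse ((t + 1/2) + real k))) \<longlonglongrightarrow> Digamma (t + 1/2)"
    using Digamma_LIMSEQ[of "t + 1/2"] t by simp
  from tendsto_add[OF A_lim[OF t] B]
  show ?thesis by (simp add: algebra_simps)
qed

lemma h_int:
  assumes K: "K \<ge> 0"
  shows "((\<lambda>x. K / (1 + x\<^sup>2)) has_integral K * (pi/2)) {0..}"
proof -
  have "((\<lambda>x. K / (1 + x\<^sup>2)) has_integral (K * (pi/2) - K * arctan 0)) {0..}"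
  proof (rule FTC_Ici)
    fix x :: real
    have "1 + x\<^sup>2 > 0" by (simp add: add_pos_nonneg)
    then show "((\<lambda>x. K * arctan x) has_real_derivative K / (1 + x\<^sup>2)) (at x)"
      by (auto intro!: derivative_eq_intros simp: field_simps)
    have "1 + x\<^sup>2 \<noteq> 0" by (smt (verit) zero_le_power2)
    then show "isCont (\<lambda>x. K / (1 + x\<^sup>2)) x" by (intro continuous_intros) auto
  next
    fix x :: real assume "x \<ge> 0" then show "K / (1 + x\<^sup>2) \<ge> 0" using K by simp
  next
    show "((\<lambda>x. K * arctan x) \<longlongrightarrow> K * (pi/2)) at_top"
      by (intro tendsto_intros tendsto_arctan_at_top)
  qed
  then show ?thesis by simp
qed

lemma dom_bound:
  assumes t: "t > 0" and N: "N > 0" and x: "x \<ge> 0"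
  shows "norm (x / (t\<^sup>2 + x\<^sup>2) * (RR N x - SS N x)) \<le> (3 + 2 / t\<^sup>2) / (1 + x\<^sup>2)"
proof -
  have D1: "\<bar>RR N x - SS N x\<bar> \<le> 1"
    using SS_lt1[of x N] SS_nonneg[of x N] SS_lt1[of "real N * x" "N*N"] SS_nonneg[of "real N * x" "N*N"] x
    by (simp add: RR_def abs_le_iff)
  have tx: "t\<^sup>2 + x\<^sup>2 > 0" using t by (simp add: add_pos_nonneg)
  have q0: "x / (t\<^sup>2 + x\<^sup>2) \<ge> 0" using x tx by simp
  have K0: "3 + 2 / t\<^sup>2 > 0" using t by (simp add: add_pos_nonneg)
  show ?thesis
  proof (cases "x \<le> 1")
    case True
    have "x / (t\<^sup>2 + x\<^sup>2) \<le> x / t\<^sup>2" using x t tx by (intro divide_left_mono) auto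
    also have "\<dots> \<le> 1 / t\<^sup>2" using True t by (intro divide_right_mono) auto
    finally have q1: "x / (t\<^sup>2 + x\<^sup>2) \<le> 1 / t\<^sup>2" .
    have "norm (x / (t\<^sup>2 + x\<^sup>2) * (RR N x - SS N x)) = x / (t\<^sup>2 + x\<^sup>2) * \<bar>RR N x - SS N x\<bar>"
      using q0 x tx by (simp add: abs_mult)
    also have "\<dots> \<le> 1 / t\<^sup>2 * 1" using q1 D1 q0 by (intro mult_mono) auto
    also have "\<dots> \<le> (2 / t\<^sup>2) / (1 + x\<^sup>2)"
    proof -
      have "1 + x\<^sup>2 \<le> 2" using True x by (simp add: power_le_one)
      then have "(2 / t\<^sup>2) / 2 \<le> (2 / t\<^sup>2) / (1 + x\<^sup>2)" using t by (intro divide_left_mono) (auto simp: add_pos_nonneg)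
      then show ?thesis by simp
    qed
    also have "\<dots> \<le> (3 + 2 / t\<^sup>2) / (1 + x\<^sup>2)" by (intro divide_right_mono) (auto simp: add_pos_nonneg)
    finally show ?thesis .
  next
    case False
    then have x1: "x > 1" by simp
    have q1: "x / (t\<^sup>2 + x\<^sup>2) \<le> 1 / x"
      using x1 t by (simp add: field_simps power2_eq_square add_pos_nonneg)
    have "norm (x / (t\<^sup>2 + x\<^sup>2) * (RR N x - SS N x)) = x / (t\<^sup>2 + x\<^sup>2) * \<bar>RR N x - SS N x\<bar>"
      using q0 x tx by (simp add: abs_mult)
    also have "\<dots> \<le> 1 / x * (5 / (4 * x\<^sup>2))" using q1 D_bound[OF N, of x] x1 q0 by (intro mult_mono) auto
    also have "\<dots> \<le> 5 / (4 * x\<^sup>2)"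
    proof -
      have "1 / x \<le> 1" using x1 by simp
      then show ?thesis using x1 by (intro mult_left_le_one_le) auto
    qed
    also have "\<dots> \<le> 3 / (1 + x\<^sup>2)"
    proof -
      have xx: "x\<^sup>2 > 1" using x1 by (simp add: one_less_power)
      then show ?thesis by (simp add: divide_simps)
    qed
    also have "\<dots> \<le> (3 + 2 / t\<^sup>2) / (1 + x\<^sup>2)" by (intro divide_right_mono) (auto simp: add_pos_nonneg)
    finally show ?thesis .
  qed
qed

lemma main_integral:
  assumes t: "t > 0"
  shows "((\<lambda>x. x / (t\<^sup>2 + x\<^sup>2) * (1 - tanh (pi * x))) has_integral (Digamma (t + 1/2) - ln t)) {0..}"
proof (rule has_integral_dominated_convergence)
  let ?f = "\<lambda>k x. x / (t\<^sup>2 + x\<^sup>2) * (RR (Suc k) x - SS (Suc k) x)"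
  let ?y = "\<lambda>k. (\<Sum>j<Suc k * Suc k. inverse ((real (Suc k) * t + 1/2) + real j)) - (\<Sum>j<Suc k. inverse ((t + 1/2) + real j))"
  show "(?f k has_integral ?y k) {0..}" for k
    by (rule int_qD[OF t]) simp
  have "3 + 2 / t\<^sup>2 \<ge> 0" by (simp add: add_nonneg_nonneg)
  from h_int[OF this] show "(\<lambda>x. (3 + 2 / t\<^sup>2) / (1 + x\<^sup>2)) integrable_on {0..}"
    by (auto simp: integrable_on_def)
  show "\<forall>x\<in>{0..}. norm (?f k x) \<le> (3 + 2 / t\<^sup>2) / (1 + x\<^sup>2)" for k
    using dom_bound[OF t] by auto
  show "\<forall>x\<in>{0..}. (\<lambda>k. ?f k x) \<longlonglongrightarrow> x / (t\<^sup>2 + x\<^sup>2) * (1 - tanh (pi * x))"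
  proof
    fix x :: real assume "x \<in> {0..}"
    then have x: "x \<ge> 0" by simp
    show "(\<lambda>k. ?f k x) \<longlonglongrightarrow> x / (t\<^sup>2 + x\<^sup>2) * (1 - tanh (pi * x))"
    proof (cases "x = 0")
      case True then show ?thesis by simp
    next
      case False
      with x have x0: "x > 0" by simp
      have "(\<lambda>N. RR N x - SS N x) \<longlonglongrightarrow> 1 - tanh (pi * x)"
      proof (intro tendsto_diff RR_lim x0)
        show "(\<lambda>N. SS N x) \<longlonglongrightarrow> tanh (pi * x)"
          using pk_sums[of x] unfolding SS_def sums_def by simp
      qed
      then have "(\<lambda>k. RR (Suc k) x - SS (Suc k) x) \<longlonglongrightarrow> 1 - tanh (pi * x)"
        by (rule LIMSEQ_Suc)
      then show ?thesis by (intro tendsto_mult tendsto_const)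
    qed
  qed
  show "?y \<longlonglongrightarrow> Digamma (t + 1/2) - ln t"
    using LIMSEQ_Suc[OF V_lim[OF t]] by simp
qed

theorem mainTheorem7:
  shows "(\<forall>t::real. t > 0 \<longrightarrow>
      ((\<lambda>x. x / (t\<^sup>2 + x\<^sup>2) * (1 - tanh (pi * x))) has_integral
          (Digamma (2 * t) + dbeta (2 * t) - ln (2 * t))) {0..}
    \<and> Digamma (2 * t) + dbeta (2 * t) - ln (2 * t) = Digamma (t + 1/2) - ln t)
   \<and> ((\<lambda>x::real. x / (1 + x\<^sup>2) * (1 - tanh (pi * x))) has_integral Digamma (3/2 :: real)) {0..}"
proof
  show "\<forall>t::real. t > 0 \<longrightarrow>
      ((\<lambda>x. x / (t\<^sup>2 + x\<^sup>2) * (1 - tanh (pi * x))) has_integral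
          (Digamma (2 * t) + dbeta (2 * t) - ln (2 * t))) {0..}
    \<and> Digamma (2 * t) + dbeta (2 * t) - ln (2 * t) = Digamma (t + 1/2) - ln t"
    using main_integral dbeta_identity by simp
  have "((\<lambda>x. x / (1\<^sup>2 + x\<^sup>2) * (1 - tanh (pi * x))) has_integral (Digamma (1 + 1/2) - ln 1)) {0..}"
    by (rule main_integral) simp
  moreover have "(1::real) + 1/2 = 3/2" by simp
  ultimately show "((\<lambda>x::real. x / (1 + x\<^sup>2) * (1 - tanh (pi * x))) has_integral Digamma (3/2 :: real)) {0..}"
    by simp
qed


end
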